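(* Let $n=m=1$ (scalars $A\neq0$, $B\neq0$, $Q,R>0$) in the setting of the context, and assume $q<q_c$. Then the stability threshold satisfies $$\bar\delta(q)\ge\frac{Q(R+B^2P)}{A^2B^2P^2}+\frac{(1-q)R}{R+B^2P},$$ where $P>0$ solves $P=Q+A^2P-(1-q)(R+B^2P)^{-1}A^2B^2P^2$.
   Context: Let $A\in\mathbb{R}^{n\times n}$, $B\in\mathbb{R}^{n\times m}$ with $(A,B)$ stabilizable, and let $Q$, $R$ be symmetric positive definite. Let $q\in(0,1)$ be the loss probability of $x_{t+1}=Ax_t+\lambda_tBu_t$ with i.i.d. $\lambda_t$, $\mathcal P(\lambda_t=0)=q$. For $p\in[0,1)$ the modified Riccati equation with parameter $p$ is $X=Q+A^\top XA-(1-p)A^\top XB(R+B^\top XB)^{-1}B^\top XA$; $q_c$ is the critical loss probability such that for every $p\in[0,q_c)$ this equation has a unique positive definite solution. For $\hat q\in[0,q_c)$ let $\hat P$ be the positive definite solution for parameter $\hat q$ and $\hat K=-(R+B^\top\hat PB)^{-1}B^\top\hat PA$. Define $\mathcal C(q,\hat q)=Q+(1-q)\hat K^\top R\hat K-(q-\hat q)A^\top\hat PB(R+B^\top\hat PB)^{-1}B^\top\hat PA$ and the stability threshold $\bar\delta(q)=\sup\{\delta\ge0:\ \mathcal C(q,\hat q)\succ0 \text{ for all } \hat q\in[0,q_c)\text{ with } q-\hat q<\delta\}$ (possibly $+\infty$). *)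

theory Defs
  imports Complex_Main "HOL-Library.Extended_Real"
begin

text \<open>Scalar case n = m = 1: all matrices are real numbers, transposes are identities.\<close>

definition mare :: "real \<Rightarrow> real \<Rightarrow> real \<Rightarrow> real \<Rightarrow> real \<Rightarrow> real \<Rightarrow> bool" where
  "mare A B Q R p X \<longleftrightarrow>
     X = Q + A * X * A - (1 - p) * (A * X * B) * inverse (R + B * X * B) * (B * X * A)"

definition qcrit :: "real \<Rightarrow> real \<Rightarrow> real \<Rightarrow> real \<Rightarrow> real" where
  "qcrit A B Q R = Sup {r. 0 \<le> r \<and> r \<le> 1 \<and>
      (\<forall>p. 0 \<le> p \<and> p < r \<longrightarrow> (\<exists>!X. X > 0 \<and> mare A B Q R p X))}"

definition Phat :: "real \<Rightarrow> real \<Rightarrow> real \<Rightarrow> real \<Rightarrow> real \<Rightarrow> real" where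
  "Phat A B Q R qh = (THE X. X > 0 \<and> mare A B Q R qh X)"

definition Khat :: "real \<Rightarrow> real \<Rightarrow> real \<Rightarrow> real \<Rightarrow> real \<Rightarrow> real" where
  "Khat A B Q R qh = - (inverse (R + B * Phat A B Q R qh * B) * (B * Phat A B Q R qh * A))"

definition Ccal :: "real \<Rightarrow> real \<Rightarrow> real \<Rightarrow> real \<Rightarrow> real \<Rightarrow> real \<Rightarrow> real" where
  "Ccal A B Q R q qh = Q + (1 - q) * (Khat A B Q R qh * R * Khat A B Q R qh)
     - (q - qh) * (A * Phat A B Q R qh * B) * inverse (R + B * Phat A B Q R qh * B)
         * (B * Phat A B Q R qh * A)"

definition deltabar :: "real \<Rightarrow> real \<Rightarrow> real \<Rightarrow> real \<Rightarrow> real \<Rightarrow> ereal" where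
  "deltabar A B Q R q = Sup (ereal ` {\<delta>. \<delta> \<ge> 0 \<and>
      (\<forall>qh. 0 \<le> qh \<and> qh < qcrit A B Q R \<and> q - qh < \<delta> \<longrightarrow> Ccal A B Q R q qh > 0)})"

end

theory Submission
  imports Defs
begin

definition phi :: "real \<Rightarrow> real \<Rightarrow> real \<Rightarrow> real \<Rightarrow> real \<Rightarrow> real \<Rightarrow> real" where
  "phi A B Q R p X = Q*R + (Q*B^2 - R + A^2*R)*X + (A^2*p*B^2 - B^2)*X^2"

lemma mare_phi:
  assumes "X > 0" "R > 0"
  shows "mare A B Q R p X \<longleftrightarrow> phi A B Q R p X = 0"
proof -
  have d: "R + B*X*B > 0" proof - have "B*X*B \<ge> 0" using assms by (metis mult.commute mult.left_commute mult_nonneg_nonneg less_imp_le zero_le_square) then show ?thesis using assms by linarith qed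
  have "mare A B Q R p X \<longleftrightarrow> X*(R + B*X*B) = Q*(R + B*X*B) + A*X*A*(R + B*X*B) - (1-p)*(A*X*B)*(B*X*A)"
    unfolding mare_def using d by (auto simp: field_simps)
  also have "\<dots> \<longleftrightarrow> phi A B Q R p X = 0"
    unfolding phi_def by (auto simp: algebra_simps power2_eq_square)
  finally show ?thesis .
qed

lemma P_phi:
  assumes "P > 0" "R > 0"
    and "P = Q + A^2 * P - (1 - q) * inverse (R + B^2 * P) * A^2 * B^2 * P^2"
  shows "phi A B Q R q P = 0"
proof -
  have d: "R + B^2*P > 0" using assms by (simp add: add_pos_nonneg)
  from assms(3) have "P*(R + B^2*P) = Q*(R + B^2*P) + A^2*P*(R + B^2*P) - (1-q)*A^2*B^2*P^2"
    using d by (auto simp: field_simps)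
  then show ?thesis unfolding phi_def by (auto simp: algebra_simps power2_eq_square)
qed

lemma qcrit_sol:
  assumes "0 \<le> p" "p < qcrit A B Q R"
  shows "\<exists>!X. X > 0 \<and> mare A B Q R p X"
proof -
  let ?S = "{r. 0 \<le> r \<and> r \<le> 1 \<and>
      (\<forall>p. 0 \<le> p \<and> p < r \<longrightarrow> (\<exists>!X. X > 0 \<and> mare A B Q R p X))}"
  have ne: "?S \<noteq> {}" proof - have "(0::real) \<in> ?S" by auto then show ?thesis by blast qed
  have bd: "bdd_above ?S" by (rule bdd_aboveI[of _ 1]) auto
  from assms(2) obtain r where "r \<in> ?S" "p < r" unfolding qcrit_def using less_cSup_iff[OF ne bd] by blast
  then show ?thesis using assms(1) by auto
qed

lemma qcrit_above:
  assumes "0 \<le> q" "q < qcrit A B Q R"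
  shows "\<exists>p. q < p \<and> p < 1 \<and> (\<exists>X. X > 0 \<and> mare A B Q R p X)"
proof -
  let ?S = "{r. 0 \<le> r \<and> r \<le> 1 \<and>
      (\<forall>p. 0 \<le> p \<and> p < r \<longrightarrow> (\<exists>!X. X > 0 \<and> mare A B Q R p X))}"
  have ne: "?S \<noteq> {}" proof - have "(0::real) \<in> ?S" by auto then show ?thesis by blast qed
  have bd: "bdd_above ?S" by (rule bdd_aboveI[of _ 1]) auto
  from assms(2) obtain r where r: "r \<in> ?S" "q < r" unfolding qcrit_def using less_cSup_iff[OF ne bd] by blast
  define p where "p = (q + r)/2"
  have "q < p" "p < r" "p < 1" using r by (auto simp: p_def)
  moreover have "\<exists>!X. X > 0 \<and> mare A B Q R p X" using r `q < p` `p < r` assms(1) by auto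
  then have "\<exists>X. X > 0 \<and> mare A B Q R p X" by blast
  ultimately show ?thesis by blast
qed

lemma quad_id:
  fixes c0 c1 c2 x :: real
  shows "4*c2*(c0 + c1*x + c2*x^2) = (2*c2*x+c1)^2 - (c1^2 - 4*c2*c0)"
  by (simp add: algebra_simps power2_eq_square)

lemma two_roots:
  fixes c0 c1 c2 X0 :: real
  assumes "c0 > 0" "c2 > 0" "X0 > 0" "c0 + c1*X0 + c2*X0^2 < 0"
  shows "\<exists>x y. x > 0 \<and> y > 0 \<and> x \<noteq> y \<and> c0 + c1*x + c2*x^2 = 0 \<and> c0 + c1*y + c2*y^2 = 0"
proof -
  define D where "D = c1^2 - 4*c2*c0"
  have "c2*X0^2 \<ge> 0" using assms by simp
  then have "c1*X0 < 0" using assms by linarith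
  then have c1: "c1 < 0" using assms(3) by (simp add: mult_less_0_iff)
  have "4*c2*(c0 + c1*X0 + c2*X0^2) < 0" using assms by (simp add: mult_pos_neg)
  then have "(2*c2*X0+c1)^2 - D < 0" using quad_id[of c2 c0 c1 X0] unfolding D_def by simp
  then have Dp: "D > 0" using zero_le_power2[of "2*c2*X0+c1"] by linarith
  have "4*c2*c0 > 0" using assms by simp
  then have Dl: "D < (-c1)^2" unfolding D_def by simp
  define s where "s = sqrt D"
  have s: "s > 0" "s^2 = D" using Dp by (auto simp: s_def)
  have sl: "s < - c1" using power_less_imp_less_base[of s 2 "-c1"] Dl s c1 by simp
  define x where "x = (-c1 - s)/(2*c2)"
  define y where "y = (-c1 + s)/(2*c2)"
  have "x > 0" "y > 0" using assms s sl c1 by (auto simp: x_def y_def)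
  moreover have "x \<noteq> y" using assms s by (auto simp: x_def y_def divide_simps)
  moreover have ex: "2*c2*x + c1 = -s" "2*c2*y + c1 = s" using assms by (auto simp: x_def y_def)
  have "4*c2*(c0 + c1*x + c2*x^2) = 0" "4*c2*(c0 + c1*y + c2*y^2) = 0"
    using quad_id[of c2 c0 c1 x] quad_id[of c2 c0 c1 y] ex s unfolding D_def by simp_all
  then have "c0 + c1*x + c2*x^2 = 0" "c0 + c1*y + c2*y^2 = 0" using assms by simp_all
  ultimately show ?thesis by blast
qed

lemma c2_nonpos:
  assumes "Q > 0" "R > 0" "0 \<le> q" "q < qcrit A B Q R"
  shows "A^2*q*B^2 - B^2 \<le> 0"
proof (rule ccontr)
  assume c: "\<not> ?thesis"
  obtain p X0 where p: "q < p" "p < 1" "X0 > 0" "mare A B Q R p X0" using qcrit_above[OF assms(3,4)] by blast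
  have "phi A B Q R p X0 = 0" using mare_phi p assms by blast
  have "A \<noteq> 0" "B \<noteq> 0" using c by auto
  then have pos: "A^2*B^2*(p-q)*X0^2 > 0" using p by simp
  have "phi A B Q R p X0 = phi A B Q R q X0 + A^2*B^2*(p-q)*X0^2" unfolding phi_def by (simp add: algebra_simps)
  then have neg: "phi A B Q R q X0 < 0" using `phi A B Q R p X0 = 0` pos by linarith
  obtain x y where xy: "x > 0" "y > 0" "x \<noteq> y" "phi A B Q R q x = 0" "phi A B Q R q y = 0"
    using two_roots[of "Q*R" "A^2*q*B^2 - B^2" X0 "Q*B^2 - R + A^2*R"] c neg p assms unfolding phi_def by auto
  have "\<exists>!X. X > 0 \<and> mare A B Q R q X" using qcrit_sol assms by blast
  moreover have "mare A B Q R q x" "mare A B Q R q y" using xy mare_phi assms by blast+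
  ultimately show False using xy by blast
qed

lemma Phat_props:
  assumes "Q > 0" "R > 0" "0 \<le> qh" "qh < qcrit A B Q R"
  shows "Phat A B Q R qh > 0" "mare A B Q R qh (Phat A B Q R qh)"
proof -
  have "\<exists>!X. X > 0 \<and> mare A B Q R qh X" using qcrit_sol assms by blast
  then have "Phat A B Q R qh > 0 \<and> mare A B Q R qh (Phat A B Q R qh)"
    unfolding Phat_def by (rule theI')
  then show "Phat A B Q R qh > 0" "mare A B Q R qh (Phat A B Q R qh)" by auto
qed

lemma Phat_le:
  assumes "Q > 0" "R > 0" "0 \<le> qh" "qh \<le> q" "q < qcrit A B Q R" "P > 0" "phi A B Q R q P = 0"
  shows "Phat A B Q R qh \<le> P"
proof (rule ccontr)
  let ?X = "Phat A B Q R qh"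
  assume "\<not> ?thesis"
  then have XP: "?X > P" by simp
  have "qh < qcrit A B Q R" using assms by linarith
  then have X: "?X > 0" "mare A B Q R qh ?X" using Phat_props assms by blast+
  then have z: "phi A B Q R qh ?X = 0" using mare_phi assms by blast
  have "phi A B Q R q ?X = phi A B Q R qh ?X + A^2*B^2*(q-qh)*?X^2" unfolding phi_def by (simp add: algebra_simps)
  moreover have "A^2*B^2*(q-qh)*?X^2 \<ge> 0" using assms by simp
  ultimately have ge: "phi A B Q R q ?X \<ge> 0" using z by linarith
  define c2 where "c2 = A^2*q*B^2 - B^2"
  define c1 where "c1 = Q*B^2 - R + A^2*R"
  have ph: "phi A B Q R q Y = Q*R + c1*Y + c2*Y^2" for Y unfolding phi_def c1_def c2_def by simp
  have "0 \<le> q" using assms by linarith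
  then have c2: "c2 \<le> 0" using c2_nonpos[OF assms(1,2) _ assms(5)] unfolding c2_def by blast
  have h: "Q*R + c1*P + c2*P^2 = 0" using assms(7) ph by simp
  have fac: "P * phi A B Q R q Y = (Y - P)*(c2*Y*P - Q*R)" for Y
  proof -
    have "P*(Q*R + c1*Y + c2*Y^2) - (Y - P)*(c2*Y*P - Q*R) = Y*(Q*R + c1*P + c2*P^2)"
      by (simp add: algebra_simps power2_eq_square)
    then show ?thesis using h ph by simp
  qed
  have "c2*?X*P \<le> 0" using c2 X assms by (simp add: mult_nonpos_nonneg)
  then have "c2*?X*P - Q*R < 0" using assms mult_pos_pos[of Q R] by linarith
  then have "(?X - P)*(c2*?X*P - Q*R) < 0" using XP by (simp add: mult_pos_neg)
  then have "P * phi A B Q R q ?X < 0" using fac by simp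
  moreover have "P * phi A B Q R q ?X \<ge> 0" using ge assms(6) by simp
  ultimately show False by linarith
qed


definition ff :: "real \<Rightarrow> real \<Rightarrow> real \<Rightarrow> real \<Rightarrow> real \<Rightarrow> real \<Rightarrow> real" where
  "ff A B Q R q x = Q * (R + B^2 * x) / (A^2 * B^2 * x^2) + (1 - q) * R / (R + B^2 * x)"

lemma ff_anti:
  assumes "A \<noteq> 0" "B \<noteq> 0" "Q > 0" "R > 0" "q < 1" "0 < x" "x \<le> y"
  shows "ff A B Q R q y \<le> ff A B Q R q x"
proof -
  have e: "Q * (R + B^2 * z) / (A^2 * B^2 * z^2) = Q*R/(A^2*B^2*z^2) + Q/(A^2*z)" if "z > 0" for z
    using that assms by (simp add: field_simps power2_eq_square)
  have y: "y > 0" using assms by linarith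
  have "x^2 \<le> y^2" using assms by (simp add: power_mono)
  then have "A^2*B^2*x^2 \<le> A^2*B^2*y^2" by (simp add: mult_left_mono)
  then have t1: "Q*R/(A^2*B^2*y^2) \<le> Q*R/(A^2*B^2*x^2)"
    using assms y by (intro divide_left_mono) auto
  have "A^2*x \<le> A^2*y" using assms by (simp add: mult_left_mono)
  then have t2: "Q/(A^2*y) \<le> Q/(A^2*x)" using assms y by (intro divide_left_mono) auto
  have "B^2*x \<le> B^2*y" using assms by (simp add: mult_left_mono)
  then have "R + B^2*x \<le> R + B^2*y" by simp
  moreover have "R + B^2*x > 0" using assms by (simp add: add_pos_nonneg)
  moreover have "R + B^2*y > 0" using assms y by (simp add: add_pos_nonneg)
  ultimately have t3: "(1 - q) * R / (R + B^2 * y) \<le> (1 - q) * R / (R + B^2 * x)"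
    using assms by (intro divide_left_mono) auto
  show ?thesis unfolding ff_def using e[OF y] e[OF assms(6)] t1 t2 t3 by linarith
qed

lemma alg_id:
  fixes k d Q R q t :: real
  assumes "k \<noteq> 0" "d > 0"
  shows "Q + (1-q)*((-(inverse d * k))*R*(-(inverse d * k))) - t*k*inverse d*k
     = (k^2/d)*(Q*d/k^2 + (1-q)*R/d - t)"
  using assms by (simp add: field_simps power2_eq_square)

lemma Ccal_eq:
  assumes "A \<noteq> 0" "B \<noteq> 0" "R > 0" "Phat A B Q R qh > 0"
  shows "Ccal A B Q R q qh = (A^2*B^2*(Phat A B Q R qh)^2/(R + B^2*Phat A B Q R qh))
           * (ff A B Q R q (Phat A B Q R qh) - (q - qh))"
proof -
  define X where "X = Phat A B Q R qh"
  have X: "X > 0" using assms X_def by simp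
  have d: "R + B^2*X > 0" using X assms by (simp add: add_pos_nonneg)
  have d2: "R + B*X*B = R + B^2*X" by (simp add: power2_eq_square algebra_simps)
  have k1: "A*X*B = A*B*X" "B*X*A = A*B*X" by (simp_all add: algebra_simps)
  have k2: "A^2*B^2*X^2 = (A*B*X)^2" by (simp add: power_mult_distrib)
  have kn: "A*B*X \<noteq> 0" using assms X by simp
  have "Ccal A B Q R q qh = Q + (1-q)*((-(inverse (R + B^2*X) * (A*B*X)))*R*(-(inverse (R + B^2*X) * (A*B*X))))
      - (q-qh)*(A*B*X)*inverse (R + B^2*X)*(A*B*X)"
    unfolding Ccal_def Khat_def X_def[symmetric] d2 k1 by (simp add: mult.assoc)
  also have "\<dots> = ((A*B*X)^2/(R + B^2*X))*(Q*(R + B^2*X)/(A*B*X)^2 + (1-q)*R/(R + B^2*X) - (q-qh))"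
    by (rule alg_id[OF kn d])
  finally show ?thesis unfolding ff_def X_def[symmetric] k2 by simp
qed

lemma Ccal_pos_ge:
  assumes "R > 0" "q < 1" "q \<le> qh" "Phat A B Q R qh > 0" "Q > 0"
  shows "Ccal A B Q R q qh > 0"
proof -
  define X where "X = Phat A B Q R qh"
  have X: "X > 0" using assms X_def by simp
  have d: "R + B^2*X > 0" using X assms by (simp add: add_pos_nonneg)
  have d2: "R + B*X*B = R + B^2*X" by (simp add: power2_eq_square algebra_simps)
  define K where "K = Khat A B Q R qh"
  have "K*R*K = R*K^2" by (simp add: power2_eq_square)
  moreover have "R*K^2 \<ge> 0" using assms by simp
  ultimately have "K*R*K \<ge> 0" by linarith
  then have k: "(1-q)*(K*R*K) \<ge> 0" using assms by simp
  have "(A * X * B) * inverse (R + B * X * B) * (B * X * A) = (A*B*X)^2 / (R + B^2*X)"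
    unfolding d2 by (simp add: power2_eq_square field_simps)
  also have "\<dots> \<ge> 0" using d by simp
  finally have "(q - qh) * ((A * X * B) * inverse (R + B * X * B) * (B * X * A)) \<le> 0"
    using assms by (simp add: mult_nonpos_nonneg)
  then show ?thesis unfolding Ccal_def K_def[symmetric] X_def[symmetric] using k assms
    by (simp add: mult.assoc)
qed

theorem theorem4:
  fixes A B Q R q P :: real
  assumes "A \<noteq> 0" and "B \<noteq> 0" and "Q > 0" and "R > 0"
    and "0 < q" and "q < 1" and "q < qcrit A B Q R"
    and "P > 0" and "P = Q + A^2 * P - (1 - q) * inverse (R + B^2 * P) * A^2 * B^2 * P^2"
  shows "ereal (Q * (R + B^2 * P) / (A^2 * B^2 * P^2) + (1 - q) * R / (R + B^2 * P))
           \<le> deltabar A B Q R q"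
proof -
  let ?d = "Q * (R + B^2 * P) / (A^2 * B^2 * P^2) + (1 - q) * R / (R + B^2 * P)"
  have dff: "?d = ff A B Q R q P" unfolding ff_def by simp
  have ph: "phi A B Q R q P = 0" using P_phi assms by blast
  have dP: "R + B^2*P > 0" using assms by (simp add: add_pos_nonneg)
  have "?d \<ge> 0" using assms dP by (intro add_nonneg_nonneg divide_nonneg_pos) auto
  moreover have "Ccal A B Q R q qh > 0" if qh: "0 \<le> qh" "qh < qcrit A B Q R" "q - qh < ?d" for qh
  proof -
    have Xp: "Phat A B Q R qh > 0" using Phat_props assms qh by blast
    show ?thesis
    proof (cases "q \<le> qh")
      case True
      then show ?thesis using Ccal_pos_ge assms Xp by blast
    next
      case False
      have le: "Phat A B Q R qh \<le> P" using Phat_le[OF assms(3,4) qh(1) _ assms(7,8) ph] False by simp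
      have "ff A B Q R q P \<le> ff A B Q R q (Phat A B Q R qh)"
        using ff_anti[OF assms(1-4,6) Xp le] .
      then have pos2: "ff A B Q R q (Phat A B Q R qh) - (q - qh) > 0" using qh dff by linarith
      have "A^2*B^2*(Phat A B Q R qh)^2/(R + B^2*Phat A B Q R qh) > 0"
        using assms Xp by (simp add: add_pos_nonneg)
      then show ?thesis unfolding Ccal_eq[OF assms(1,2,4) Xp] using pos2 by (rule mult_pos_pos)
    qed
  qed
  ultimately have "?d \<in> {\<delta>. \<delta> \<ge> 0 \<and>
      (\<forall>qh. 0 \<le> qh \<and> qh < qcrit A B Q R \<and> q - qh < \<delta> \<longrightarrow> Ccal A B Q R q qh > 0)}" by blast
  then show ?thesis unfolding deltabar_def by (intro Sup_upper) blast
qed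

end
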